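(* Let $f(x_1,\ldots,x_n)=\gamma x_1^{\alpha_1}\cdots x_n^{\alpha_n}$ be an $n$-input Cobb–Douglas production function, where $\gamma>0$ and $\alpha_1,\ldots,\alpha_n$ are nonzero constants. Then the production hypersurface $\Phi(f)=\{(x,f(x))\}$ is isotropic minimal in $\mathbf{I}^{n+1}$ if and only if $f=\gamma x_1\cdots x_n$ for some nonzero constant $\gamma$ (i.e. $\alpha_1=\cdots=\alpha_n=1$).
   Context: The isotropic space $\mathbf{I}^{n+1}$ is $\mathbb{R}^{n+1}$ with the degenerate isotropic metric, the $x_{n+1}$-direction being isotropic; the graph $\Phi(f)=\{(x,f(x)):x\in D\}$ of a function $f$ on a domain $D\subset\mathbb{R}^n$ is regarded as a hypersurface in $\mathbf{I}^{n+1}$. Its isotropic mean curvature is $K_1=\frac1n\operatorname{trace}(D^2f)=\frac1n\Delta f$ with $\Delta=\sum_j\partial^2/\partial x_j^2$; $\Phi(f)$ is isotropic minimal if $K_1\equiv0$, i.e. $\Delta f=0$. *)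

theory Defs
  imports "HOL-Analysis.Analysis"
begin

definition partial_deriv :: "'n::finite \<Rightarrow> (real^'n \<Rightarrow> real) \<Rightarrow> real^'n \<Rightarrow> real" where
  "partial_deriv j g x = deriv (\<lambda>t. g (x + t *\<^sub>R axis j 1)) 0"

definition laplacian :: "(real^'n::finite \<Rightarrow> real) \<Rightarrow> real^'n \<Rightarrow> real" where
  "laplacian g x = (\<Sum>j\<in>UNIV. partial_deriv j (partial_deriv j g) x)"

text \<open>Isotropic mean curvature K_1 = (1/n) Delta f of the graph hypersurface.\<close>
definition isotropic_mean_curvature :: "(real^'n::finite \<Rightarrow> real) \<Rightarrow> real^'n \<Rightarrow> real" where
  "isotropic_mean_curvature g x = laplacian g x / real CARD('n)"

definition isotropic_minimal :: "(real^'n::finite \<Rightarrow> real) \<Rightarrow> (real^'n) set \<Rightarrow> bool" where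
  "isotropic_minimal g D \<longleftrightarrow> (\<forall>x\<in>D. isotropic_mean_curvature g x = 0)"

definition pos_orthant :: "(real^'n::finite) set" where
  "pos_orthant = {x. \<forall>i. 0 < x $ i}"

definition cobb_douglas :: "real \<Rightarrow> ('n::finite \<Rightarrow> real) \<Rightarrow> real^'n \<Rightarrow> real" where
  "cobb_douglas \<gamma> \<alpha> x = \<gamma> * (\<Prod>i\<in>UNIV. (x $ i) powr (\<alpha> i))"

end

theory Submission
  imports Defs
begin

definition CC :: "real \<Rightarrow> ('n::finite \<Rightarrow> real) \<Rightarrow> 'n \<Rightarrow> real^'n \<Rightarrow> real" where
  "CC \<gamma> \<alpha> j y = \<gamma> * (\<Prod>i\<in>UNIV-{j}. (y $ i) powr (\<alpha> i))"

lemma cd_line: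
  "cobb_douglas \<gamma> \<alpha> (y + t *\<^sub>R axis j 1) = CC \<gamma> \<alpha> j y * (y$j + t) powr \<alpha> j"
proof -
  have "(\<Prod>i\<in>UNIV. ((y + t *\<^sub>R axis j 1) $ i) powr (\<alpha> i))
     = ((y + t *\<^sub>R axis j 1) $ j) powr (\<alpha> j) * (\<Prod>i\<in>UNIV-{j}. ((y + t *\<^sub>R axis j 1) $ i) powr (\<alpha> i))"
    by (rule prod.remove) auto
  also have "(\<Prod>i\<in>UNIV-{j}. ((y + t *\<^sub>R axis j 1) $ i) powr (\<alpha> i)) = (\<Prod>i\<in>UNIV-{j}. (y $ i) powr (\<alpha> i))"
    by (rule prod.cong) (auto simp: axis_def)
  finally show ?thesis unfolding cobb_douglas_def CC_def by (simp add: axis_def)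
qed

lemma CC_line: "CC \<gamma> \<alpha> j (y + t *\<^sub>R axis j 1) = CC \<gamma> \<alpha> j y"
  unfolding CC_def by (intro arg_cong2[where f="(*)"] refl prod.cong) (auto simp: axis_def)

lemma pd1:
  assumes "y$j > 0"
  shows "partial_deriv j (cobb_douglas \<gamma> \<alpha>) y = CC \<gamma> \<alpha> j y * (\<alpha> j * y$j powr (\<alpha> j - 1))"
proof -
  have "((\<lambda>t. CC \<gamma> \<alpha> j y * (y$j + t) powr \<alpha> j) has_real_derivative
        CC \<gamma> \<alpha> j y * (\<alpha> j * y$j powr (\<alpha> j - 1))) (at 0)"
    using assms by (auto intro!: derivative_eq_intros)
  then show ?thesis unfolding partial_deriv_def cd_line by (rule DERIV_imp_deriv)
qed

lemma pd2:
  assumes "x$j > 0"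
  shows "partial_deriv j (partial_deriv j (cobb_douglas \<gamma> \<alpha>)) x
     = CC \<gamma> \<alpha> j x * (\<alpha> j * ((\<alpha> j - 1) * x$j powr (\<alpha> j - 1 - 1)))"
proof -
  let ?g = "\<lambda>t. CC \<gamma> \<alpha> j x * (\<alpha> j * (x$j + t) powr (\<alpha> j - 1))"
  have d: "(?g has_real_derivative CC \<gamma> \<alpha> j x * (\<alpha> j * ((\<alpha> j - 1) * x$j powr (\<alpha> j - 1 - 1)))) (at 0)"
    using assms by (auto intro!: derivative_eq_intros)
  have "((\<lambda>t. partial_deriv j (cobb_douglas \<gamma> \<alpha>) (x + t *\<^sub>R axis j 1)) has_real_derivative
         CC \<gamma> \<alpha> j x * (\<alpha> j * ((\<alpha> j - 1) * x$j powr (\<alpha> j - 1 - 1)))) (at 0)"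
  proof (rule has_field_derivative_transform_within_open[OF d, of "{t. t > - x$j}"])
    show "open {t::real. t > - x$j}" by (simp add: open_greaterThan[unfolded greaterThan_def])
    show "0 \<in> {t::real. t > - x$j}" using assms by simp
    fix t assume "t \<in> {t::real. t > - x$j}"
    hence "(x + t *\<^sub>R axis j 1) $ j > 0" by (simp add: axis_def)
    thus "?g t = partial_deriv j (cobb_douglas \<gamma> \<alpha>) (x + t *\<^sub>R axis j 1)"
      using pd1[of "x + t *\<^sub>R axis j 1" j \<gamma> \<alpha>] by (simp add: CC_line)
  qed
  then show ?thesis unfolding partial_deriv_def[of j "partial_deriv j _"] by (rule DERIV_imp_deriv)
qed

lemma lap:
  assumes "x \<in> pos_orthant"
  shows "laplacian (cobb_douglas \<gamma> \<alpha>) x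
     = cobb_douglas \<gamma> \<alpha> x * (\<Sum>j\<in>UNIV. \<alpha> j * (\<alpha> j - 1) / (x$j)^2)"
proof -
  have "laplacian (cobb_douglas \<gamma> \<alpha>) x = (\<Sum>j\<in>UNIV. cobb_douglas \<gamma> \<alpha> x * (\<alpha> j * (\<alpha> j - 1) / (x$j)^2))"
    unfolding laplacian_def
  proof (rule sum.cong[OF refl])
    fix j
    have xj: "x$j > 0" using assms by (simp add: pos_orthant_def)
    have g: "cobb_douglas \<gamma> \<alpha> x = CC \<gamma> \<alpha> j x * x$j powr \<alpha> j"
      using cd_line[of \<gamma> \<alpha> x 0 j] by simp
    have p: "x$j powr (\<alpha> j - 1 - 1) = x$j powr \<alpha> j / (x$j)^2"
      using xj by (simp add: powr_diff power2_eq_square)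
    show "partial_deriv j (partial_deriv j (cobb_douglas \<gamma> \<alpha>)) x
        = cobb_douglas \<gamma> \<alpha> x * (\<alpha> j * (\<alpha> j - 1) / (x$j)^2)"
      unfolding pd2[OF xj] p g by (simp add: field_simps)
  qed
  then show ?thesis by (simp add: sum_distrib_left)
qed

theorem proposition4p2:
  fixes \<gamma> :: real and \<alpha> :: "'n::finite \<Rightarrow> real"
  assumes "\<gamma> > 0" and "\<forall>i. \<alpha> i \<noteq> 0"
  shows "isotropic_minimal (cobb_douglas \<gamma> \<alpha>) pos_orthant \<longleftrightarrow> (\<forall>i. \<alpha> i = 1)"
proof -
  define c where "c j = \<alpha> j * (\<alpha> j - 1)" for j
  have gpos: "cobb_douglas \<gamma> \<alpha> x > 0" if "x \<in> pos_orthant" for x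
    using that assms(1) unfolding cobb_douglas_def pos_orthant_def
    by (intro mult_pos_pos prod_pos) (auto simp: less_le)
  have iff: "isotropic_minimal (cobb_douglas \<gamma> \<alpha>) pos_orthant \<longleftrightarrow>
      (\<forall>x\<in>pos_orthant. (\<Sum>j\<in>UNIV. c j / (x$j)^2) = 0)"
  proof -
    have "isotropic_mean_curvature (cobb_douglas \<gamma> \<alpha>) x = 0 \<longleftrightarrow> (\<Sum>j\<in>UNIV. c j / (x$j)^2) = 0"
      if x: "x \<in> pos_orthant" for x
    proof -
      have "cobb_douglas \<gamma> \<alpha> x \<noteq> 0" using gpos[OF x] by simp
      moreover have "real CARD('n) \<noteq> 0" by simp
      ultimately show ?thesis
        unfolding isotropic_mean_curvature_def lap[OF x] c_def by simp
    qed
    thus ?thesis unfolding isotropic_minimal_def by auto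
  qed
  show ?thesis
  proof
    assume "isotropic_minimal (cobb_douglas \<gamma> \<alpha>) pos_orthant"
    hence H: "\<And>x. x \<in> pos_orthant \<Longrightarrow> (\<Sum>j\<in>UNIV. c j / (x$j)^2) = 0" using iff by blast
    have s1: "(\<Sum>j\<in>UNIV. c j) = 0"
      using H[of "\<chi> i. 1"] by (simp add: pos_orthant_def)
    show "\<forall>i. \<alpha> i = 1"
    proof
      fix k
      have "(\<Sum>j\<in>UNIV. c j / (((\<chi> i. if i = k then 1/2 else 1)::real^'n)$j)^2) = 0"
        by (rule H) (simp add: pos_orthant_def)
      moreover have "(\<Sum>j\<in>UNIV. c j / (((\<chi> i. if i = k then 1/2 else 1)::real^'n)$j)^2)
          = (\<Sum>j\<in>UNIV. c j + (if j = k then 3 * c j else 0))"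
        by (rule sum.cong) (auto simp: power2_eq_square)
      ultimately have "c k = 0" using s1 by (simp add: sum.distrib)
      thus "\<alpha> k = 1" using assms(2) by (simp add: c_def)
    qed
  next
    assume "\<forall>i. \<alpha> i = 1"
    thus "isotropic_minimal (cobb_douglas \<gamma> \<alpha>) pos_orthant" using iff by (simp add: c_def)
  qed
qed

end
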